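(* Let $S$ be a finite GCD closed set of positive integers. If the element $x_i\in S$ generates a double-chain set in $S$, then $\Psi_{S,\frac1N}(x_i)\neq 0$.
   Context: All order notions are with respect to divisibility on the positive integers, where the meet is $\gcd$; $S$ is GCD closed if $\gcd(x,y)\in S$ for all $x,y\in S$. $C_S(x)$ is the set of elements of $S$ covered by $x$ in $(S,\mid)$; $\mathrm{meetcl}(C)$ is the set of gcds of all nonempty finite subsets of $C$. An element $x\in S$ generates a double-chain set in $S$ if $\mathrm{meetcl}(C_S(x))\setminus C_S(x)$ is a union of two disjoint (possibly empty) chains under divisibility. $\mu_S$ is the Möbius function of $(S,\mid)$ and $\Psi_{S,\frac1N}(x_i)=\sum_{x_j\in S,\ x_j\mid x_i}\mu_S(x_j,x_i)/x_j$. *)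

theory Defs
  imports Complex_Main
begin

text \<open>Positive integers are modelled as natural numbers; sets S of positive
integers satisfy 0 \<notin> S.\<close>

definition gcd_closed :: "nat set \<Rightarrow> bool" where
  "gcd_closed S \<longleftrightarrow> (\<forall>x\<in>S. \<forall>y\<in>S. gcd x y \<in> S)"

definition covered_by :: "nat set \<Rightarrow> nat \<Rightarrow> nat set" where
  "covered_by S x = {y \<in> S. y dvd x \<and> y \<noteq> x \<and>
      \<not> (\<exists>z\<in>S. y dvd z \<and> z dvd x \<and> z \<noteq> y \<and> z \<noteq> x)}"

definition meetcl :: "nat set \<Rightarrow> nat set" where
  "meetcl C = {Gcd A | A. A \<subseteq> C \<and> A \<noteq> {} \<and> finite A}"

definition dvd_chain :: "nat set \<Rightarrow> bool" where
  "dvd_chain A \<longleftrightarrow> (\<forall>a\<in>A. \<forall>b\<in>A. a dvd b \<or> b dvd a)"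

definition generates_double_chain :: "nat set \<Rightarrow> nat \<Rightarrow> bool" where
  "generates_double_chain S x \<longleftrightarrow>
     (\<exists>A B. A \<inter> B = {} \<and> dvd_chain A \<and> dvd_chain B \<and>
        meetcl (covered_by S x) - covered_by S x = A \<union> B)"

function mobius :: "nat set \<Rightarrow> nat \<Rightarrow> nat \<Rightarrow> int" where
  "mobius S x y =
     (if x \<in> S \<and> y \<in> S \<and> 0 < y \<and> x dvd y then
        (if x = y then 1
         else - (\<Sum>z\<in>{z \<in> S. x dvd z \<and> z dvd y \<and> z \<noteq> y}. mobius S x z))
      else 0)"
  by pat_completeness auto
termination
  apply (relation "measure (\<lambda>(S, x, y). y)")
   apply simp
  apply (auto simp: dvd_imp_le le_neq_implies_less)
  done

definition Psi_inv :: "nat set \<Rightarrow> nat \<Rightarrow> real" where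
  "Psi_inv S xi = (\<Sum>xj\<in>{xj \<in> S. xj dvd xi}. real_of_int (mobius S xj xi) / real xj)"

end

theory Submission
  imports Defs
begin

lemma sum_Pow_insert:
  fixes h :: "'a set \<Rightarrow> 'b::comm_monoid_add"
  assumes "finite A" "a \<notin> A"
  shows "(\<Sum>T\<in>Pow (insert a A). h T) = (\<Sum>T\<in>Pow A. h T + h (insert a T))"
proof -
  have inj: "inj_on (insert a) (Pow A)"
    using assms(2) by (auto simp: inj_on_def)
  have disj: "Pow A \<inter> insert a ` Pow A = {}" using assms(2) by auto
  have "(\<Sum>T\<in>Pow (insert a A). h T) = (\<Sum>T\<in>Pow A. h T) + (\<Sum>T\<in>insert a ` Pow A. h T)"
    unfolding Pow_insert using assms(1) disj by (intro sum.union_disjoint) auto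
  also have "(\<Sum>T\<in>insert a ` Pow A. h T) = (\<Sum>T\<in>Pow A. h (insert a T))"
    using inj by (simp add: sum.reindex)
  finally show ?thesis by (simp add: sum.distrib)
qed

lemma alt_sum_Pow:
  assumes "finite A"
  shows "(\<Sum>T\<in>Pow A. (-1::real) ^ card T) = (if A = {} then 1 else 0)"
  using assms
proof (induction A rule: finite_induct)
  case empty then show ?case by simp
next
  case (insert a A)
  have "(\<Sum>T\<in>Pow (insert a A). (-1::real) ^ card T)
        = (\<Sum>T\<in>Pow A. (-1::real) ^ card T + (-1) ^ card (insert a T))"
    by (rule sum_Pow_insert) (use insert in auto)
  also have "\<dots> = (\<Sum>T\<in>Pow A. 0)"
  proof (rule sum.cong)
    fix T assume T: "T \<in> Pow A"
    have fT: "finite T" using T insert(1) finite_subset by blast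
    have "a \<notin> T" using T insert(2) by blast
    then have "card (insert a T) = Suc (card T)" using fT by simp
    then show "(-1::real) ^ card T + (-1) ^ card (insert a T) = 0" by simp
  qed simp
  finally show ?case by simp
qed

definition FF :: "nat set \<Rightarrow> nat \<Rightarrow> real" where
  "FF C x = (\<Sum>T\<in>Pow C. (-1::real) ^ card T / real (Gcd (insert x T)))"

lemma FF_split:
  assumes "finite C" "c \<in> C" "c dvd x"
  shows "FF C x = FF (C - {c}) x - FF (C - {c}) c"
proof -
  have C: "Pow C = Pow (insert c (C - {c}))" using assms by (simp add: insert_absorb)
  have "FF C x = (\<Sum>T\<in>Pow (C - {c}). (-1::real) ^ card T / real (Gcd (insert x T))
       + (-1::real) ^ card (insert c T) / real (Gcd (insert x (insert c T))))"
    unfolding FF_def C by (rule sum_Pow_insert) (use assms in auto)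
  also have "\<dots> = (\<Sum>T\<in>Pow (C - {c}). (-1::real) ^ card T / real (Gcd (insert x T))
       - (-1::real) ^ card T / real (Gcd (insert c T)))"
  proof (rule sum.cong)
    fix T assume T: "T \<in> Pow (C - {c})"
    have fT: "finite T" using T assms(1) finite_subset by blast
    have "c \<notin> T" using T by blast
    then have "card (insert c T) = Suc (card T)" using fT by simp
    moreover have "Gcd (insert x (insert c T)) = Gcd (insert c T)"
    proof -
      have "Gcd (insert c T) dvd x" using assms(3) by (meson Gcd_dvd dvd_trans insertI1)
      then show ?thesis by (simp add: Gcd_insert gcd_nat.absorb2)
    qed
    ultimately show "(-1::real) ^ card T / real (Gcd (insert x T))
       + (-1::real) ^ card (insert c T) / real (Gcd (insert x (insert c T))) =
       (-1::real) ^ card T / real (Gcd (insert x T))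
       - (-1::real) ^ card T / real (Gcd (insert c T))" by simp
  qed simp
  finally show ?thesis unfolding FF_def by (simp add: sum_subtractf)
qed

lemma FF_empty: "FF {} x = 1 / real x"
  unfolding FF_def by simp

lemma FF_single: "FF {c} x = 1 / real x - 1 / real (gcd x c)"
  unfolding FF_def using sum_Pow_insert[of "{}" c "\<lambda>T. (-1::real)^card T / real (Gcd (insert x T))"]
  by simp

lemma FF_cancel:
  assumes "finite W" "c0 \<in> W" "\<forall>c'\<in>W. gcd c c' dvd gcd c c0"
  shows "FF W c = 1 / real c - 1 / real (gcd c c0)"
proof -
  define W' where "W' = W - {c0}"
  have W: "Pow W = Pow (insert c0 W')" "c0 \<notin> W'" "finite W'" using assms by (auto simp: W'_def insert_absorb)
  define h where "h T = (-1::real) ^ card T / real (Gcd (insert c T))" for T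
  have "FF W c = (\<Sum>T\<in>Pow W'. h T + h (insert c0 T))"
    unfolding FF_def h_def W(1) by (rule sum_Pow_insert) (use W in auto)
  also have "\<dots> = (\<Sum>T\<in>Pow W'. if T = {} then h {} + h {c0} else 0)"
  proof (rule sum.cong)
    fix T assume T: "T \<in> Pow W'"
    show "h T + h (insert c0 T) = (if T = {} then h {} + h {c0} else 0)"
    proof (cases "T = {}")
      case False
      then obtain t where t: "t \<in> T" by auto
      have fT: "finite T" using T W(3) finite_subset by blast
      have "c0 \<notin> T" using T W(2) by blast
      then have cardT: "card (insert c0 T) = Suc (card T)" using fT by simp
      have "Gcd (insert c T) dvd gcd c t" using t by (meson Gcd_dvd gcd_greatest insertCI)
      also have "gcd c t dvd gcd c c0"
      proof -
        have "t \<in> W" using t T by (auto simp: W'_def)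
        then show ?thesis using assms(3) by blast
      qed
      also have "gcd c c0 dvd c0" by simp
      finally have d: "Gcd (insert c T) dvd c0" .
      have "Gcd (insert c (insert c0 T)) = Gcd (insert c T)"
        proof -
        have "Gcd (insert c (insert c0 T)) = Gcd (insert c0 (insert c T))" by (metis insert_commute)
        also have "\<dots> = gcd c0 (Gcd (insert c T))" by (rule Gcd_insert)
        also have "\<dots> = Gcd (insert c T)" using d by (rule gcd_nat.absorb2)
        finally show ?thesis .
      qed
      then show ?thesis using False cardT by (simp add: h_def)
    qed simp
  qed simp
  also have "\<dots> = h {} + h {c0}"
    using W(3) by simp
  also have "\<dots> = 1 / real c - 1 / real (gcd c c0)" by (simp add: h_def)
  finally show ?thesis .
qed

lemma choose_c:
  assumes "finite C" "2 \<le> card C" "\<forall>c\<in>C. 0 < c"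
    and anti: "\<forall>a\<in>C. \<forall>b\<in>C. a dvd b \<longrightarrow> a = b"
    and pg: "\<forall>a\<in>C. \<forall>b\<in>C. a \<noteq> b \<longrightarrow> gcd a b \<in> A \<union> B"
    and chA: "dvd_chain A" and chB: "dvd_chain B"
  shows "\<exists>c\<in>C. \<exists>c0\<in>C. c0 \<noteq> c \<and> (\<forall>c'\<in>C. c' \<noteq> c \<longrightarrow> gcd c c' dvd gcd c c0)"
proof (rule ccontr)
  assume H: "\<not> ?thesis"
  define PG where "PG = (\<lambda>(a,b). gcd a b) ` {(a,b). a \<in> C \<and> b \<in> C \<and> a \<noteq> b}"
  have fin: "finite PG" unfolding PG_def
    by (rule finite_imageI, rule finite_subset[of _ "C \<times> C"]) (use assms(1) in auto)
  obtain a1 b1 where ab1: "a1 \<in> C" "b1 \<in> C" "a1 \<noteq> b1"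
  proof -
    have "\<not> card C \<le> Suc 0" using assms(2) by simp
    then have "\<exists>a\<in>C. \<exists>b\<in>C. a \<noteq> b" by (simp add: card_le_Suc0_iff_eq[OF assms(1)])
    then show ?thesis using that by blast
  qed
  have ne: "PG \<noteq> {}" unfolding PG_def using ab1 by blast
  define z where "z = Max PG"
  have "z \<in> PG" unfolding z_def using fin ne by simp
  then obtain a b where ab: "a \<in> C" "b \<in> C" "a \<noteq> b" "z = gcd a b" unfolding PG_def by auto
  have zmax: "\<And>a' b'. a' \<in> C \<Longrightarrow> b' \<in> C \<Longrightarrow> a' \<noteq> b' \<Longrightarrow> gcd a' b' \<le> z"
    unfolding z_def using fin by (intro Max_ge) (auto simp: PG_def)
  have incomp: "\<not> z dvd gcd a' b'" if "a' \<in> C" "b' \<in> C" "a' \<noteq> b'" "\<not> gcd a' b' dvd z" for a' b'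
  proof
    assume "z dvd gcd a' b'"
    moreover have "0 < gcd a' b'" using that assms(3) by auto
    ultimately have "z \<le> gcd a' b'" by (simp add: dvd_imp_le)
    then have "gcd a' b' = z" using zmax[OF that(1-3)] by simp
    then show False using that(4) by simp
  qed
  have Ha: "\<And>c c0. c \<in> C \<Longrightarrow> c0 \<in> C \<Longrightarrow> c0 \<noteq> c \<Longrightarrow> \<exists>c'\<in>C. c' \<noteq> c \<and> \<not> gcd c c' dvd gcd c c0"
    using H by blast
  obtain c1 where c1: "c1 \<in> C" "c1 \<noteq> a" "\<not> gcd a c1 dvd gcd a b"
    using Ha[OF ab(1) ab(2)] ab(3) by auto
  obtain c2 where c2: "c2 \<in> C" "c2 \<noteq> b" "\<not> gcd b c2 dvd gcd b a"
    using Ha[OF ab(2) ab(1)] ab(3) by auto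
  define u where "u = gcd a c1"
  define v where "v = gcd b c2"
  have u1: "\<not> u dvd z" using c1 ab by (simp add: u_def)
  have v1: "\<not> v dvd z" using c2 ab by (simp add: v_def gcd.commute)
  have u2: "\<not> z dvd u" using incomp[OF ab(1) c1(1)] c1 ab u1 by (auto simp: u_def)
  have v2: "\<not> z dvd v" using incomp[OF ab(2) c2(1)] c2 ab v1 by (auto simp: v_def)
  have uv: "\<not> u dvd v"
  proof
    assume "u dvd v"
    then have "u dvd b" unfolding v_def by (meson dvd_trans gcd_dvd1)
    moreover have "u dvd a" unfolding u_def by simp
    ultimately show False using u1 ab by simp
  qed
  have vu: "\<not> v dvd u"
  proof
    assume "v dvd u"
    then have "v dvd a" unfolding u_def by (meson dvd_trans gcd_dvd1)
    moreover have "v dvd b" unfolding v_def by simp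
    ultimately show False using v1 ab by simp
  qed
  have zAB: "z \<in> A \<union> B" using pg ab by simp
  have uAB: "u \<in> A \<union> B" using pg ab c1 by (auto simp: u_def)
  have vAB: "v \<in> A \<union> B" using pg ab c2 by (auto simp: v_def)
  show False using zAB uAB vAB chA chB u2 u1 v1 v2 uv vu unfolding dvd_chain_def by blast
qed

lemma FF_pos:
  assumes "finite C" "2 \<le> card C" "0 < x"
    and "\<forall>c\<in>C. c dvd x \<and> 0 < c"
    and "\<forall>a\<in>C. \<forall>b\<in>C. a dvd b \<longrightarrow> a = b"
    and "\<forall>a\<in>C. \<forall>b\<in>C. a \<noteq> b \<longrightarrow> gcd a b \<in> A \<union> B"
    and "dvd_chain A" "dvd_chain B"
  shows "FF C x > 0"
  using assms
proof (induction "card C" arbitrary: C rule: less_induct)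
  case less
  obtain c c0 where cc: "c \<in> C" "c0 \<in> C" "c0 \<noteq> c"
     and mx: "\<forall>c'\<in>C. c' \<noteq> c \<longrightarrow> gcd c c' dvd gcd c c0"
    using choose_c[of C A B] less.prems by auto
  define w where "w = gcd c c0"
  have cpos: "0 < c" "0 < c0" using less.prems cc by auto
  have wpos: "0 < w" using cpos by (simp add: w_def)
  have "w \<noteq> c"
  proof
    assume "w = c" then have "c dvd c0" unfolding w_def by (metis gcd_dvd2)
    then show False using less.prems(5) cc by auto
  qed
  moreover have "w dvd c" by (simp add: w_def)
  ultimately obtain k where k: "c = w * k" "k \<noteq> 1" by (metis dvdE mult.right_neutral)
  then have "k \<noteq> 0" using cpos by auto
  with k have "2 \<le> k" by linarith
  then have c2w: "2 * w \<le> c" using k(1) by simp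
  have "w \<noteq> c0"
  proof
    assume "w = c0" then have "c0 dvd c" unfolding w_def by (metis gcd_dvd1)
    then show False using less.prems(5) cc by auto
  qed
  moreover have "w dvd c0" by (simp add: w_def)
  ultimately obtain k' where k': "c0 = w * k'" "k' \<noteq> 1" by (metis dvdE mult.right_neutral)
  then have "k' \<noteq> 0" using cpos by auto
  with k' have "2 \<le> k'" by linarith
  then have c02w: "2 * w \<le> c0" using k'(1) by simp
  have split: "FF C x = FF (C - {c}) x - FF (C - {c}) c"
    using FF_split less.prems cc by auto
  have canc: "FF (C - {c}) c = 1 / real c - 1 / real w"
    unfolding w_def using cc mx less.prems(1) by (intro FF_cancel) auto
  have wr: "real w > 0" "2 * real w \<le> real c" "2 * real w \<le> real c0"
    using wpos c2w c02w by linarith+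
  have neg: "1 / real c - 1 / real w < 0"
    using wr by (simp add: field_simps)
  show ?case
  proof (cases "card C = 2")
    case True
    then have "card (C - {c}) = 1" using cc less.prems(1) by simp
    then have "C - {c} = {c0}" using cc by (metis card_1_singletonE insert_Diff insert_iff singleton_insert_inj_eq)
    then have "FF (C - {c}) x = 1 / real x - 1 / real c0"
      using FF_single[of c0 x] less.prems cc by (simp add: gcd_nat.absorb2)
    moreover have "1 / real x - 1 / real c0 - (1 / real c - 1 / real w) > 0"
    proof -
      have "1 / real c \<le> 1 / (2 * real w)" using wr by (simp add: frac_le)
      moreover have "1 / real c0 \<le> 1 / (2 * real w)" using wr by (simp add: frac_le)
      moreover have "1 / real x > 0" using less.prems by simp
      moreover have "1 / (2 * real w) + 1 / (2 * real w) = 1 / real w" by simp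
      ultimately show ?thesis by linarith
    qed
    ultimately show ?thesis using split canc by simp
  next
    case False
    then have "2 \<le> card (C - {c})" using cc less.prems(1,2) by simp
    moreover have "card (C - {c}) < card C" using cc less.prems(1) by (meson card_Diff1_less)
    ultimately have "FF (C - {c}) x > 0"
      using less.hyps[of "C - {c}"] less.prems by auto
    then show ?thesis using split canc neg by simp
  qed
qed


lemma mob_refl: "y \<in> S \<Longrightarrow> 0 < y \<Longrightarrow> mobius S y y = 1"
  by (subst mobius.simps) simp

lemma mob_rec: "w \<in> S \<Longrightarrow> y \<in> S \<Longrightarrow> 0 < y \<Longrightarrow> w dvd y \<Longrightarrow> w \<noteq> y \<Longrightarrow>
  mobius S w y = - (\<Sum>z\<in>{z \<in> S. w dvd z \<and> z dvd y \<and> z \<noteq> y}. mobius S w z)"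
  by (subst mobius.simps) simp

lemma mob_sum:
  assumes "w \<in> S" "y \<in> S" "0 < y" "w dvd y" "finite S"
  shows "(\<Sum>z\<in>{z \<in> S. w dvd z \<and> z dvd y}. mobius S w z) = (if w = y then 1 else 0)"
proof (cases "w = y")
  case True
  then have "{z \<in> S. w dvd z \<and> z dvd y} = {y}" using assms by (auto intro: dvd_antisym)
  then show ?thesis using True mob_refl assms by simp
next
  case False
  have e: "{z \<in> S. w dvd z \<and> z dvd y} = insert y {z \<in> S. w dvd z \<and> z dvd y \<and> z \<noteq> y}"
    using assms by auto
  have "(\<Sum>z\<in>{z \<in> S. w dvd z \<and> z dvd y}. mobius S w z)
      = mobius S w y + (\<Sum>z\<in>{z \<in> S. w dvd z \<and> z dvd y \<and> z \<noteq> y}. mobius S w z)"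
    unfolding e using assms(5) by (subst sum.insert) auto
  also have "\<dots> = 0" using mob_rec[OF assms(1-4) False] by simp
  finally show ?thesis using False by simp
qed

lemma psi_sum:
  assumes "finite S" "0 \<notin> S" "y \<in> S"
  shows "(\<Sum>z\<in>{z \<in> S. z dvd y}. Psi_inv S z) = 1 / real y"
proof -
  define Z where "Z = {z \<in> S. z dvd y}"
  have finZ: "finite Z" using assms(1) by (simp add: Z_def)
  have ypos: "0 < y" using assms by (cases y) auto
  define f where "f w z = real_of_int (mobius S w z) / real w" for w z
  have "(\<Sum>z\<in>Z. Psi_inv S z) = (\<Sum>z\<in>Z. \<Sum>w\<in>{w \<in> Z. w dvd z}. f w z)"
  proof (rule sum.cong)
    fix z assume z: "z \<in> Z"
    have "{w \<in> S. w dvd z} = {w \<in> Z. w dvd z}" using z by (auto simp: Z_def intro: dvd_trans)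
    then show "Psi_inv S z = (\<Sum>w\<in>{w \<in> Z. w dvd z}. f w z)"
      by (simp add: Psi_inv_def f_def)
  qed simp
  also have "\<dots> = (\<Sum>w\<in>Z. \<Sum>z | z \<in> Z \<and> w dvd z. f w z)"
    by (rule sum.swap_restrict[OF finZ finZ])
  also have "\<dots> = (\<Sum>w\<in>Z. if w = y then 1 / real y else 0)"
  proof (rule sum.cong)
    fix w assume w: "w \<in> Z"
    have e: "{z. z \<in> Z \<and> w dvd z} = {z \<in> S. w dvd z \<and> z dvd y}" by (auto simp: Z_def)
    have "(\<Sum>z | z \<in> Z \<and> w dvd z. f w z)
       = real_of_int (\<Sum>z\<in>{z \<in> S. w dvd z \<and> z dvd y}. mobius S w z) / real w"
      unfolding e f_def by (simp add: sum_divide_distrib)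
    also have "\<dots> = (if w = y then 1 / real y else 0)"
      using w assms ypos by (subst mob_sum) (auto simp: Z_def)
    finally show "(\<Sum>z | z \<in> Z \<and> w dvd z. f w z) = (if w = y then 1 / real y else 0)" .
  qed simp
  also have "\<dots> = 1 / real y" using finZ assms by (simp add: Z_def)
  finally show ?thesis by (simp add: Z_def)
qed

function gg :: "nat \<Rightarrow> real" where
  "gg n = (if n = 0 then 0 else 1 / real n - (\<Sum>d\<in>{d. d dvd n \<and> d < n}. gg d))"
  by pat_completeness auto
termination by (relation "measure id") auto

declare gg.simps[simp del]

lemma gg_sum:
  assumes "0 < n"
  shows "(\<Sum>d\<in>{d. d dvd n}. gg d) = 1 / real n"
proof -
  have e: "{d. d dvd n} = insert n {d. d dvd n \<and> d < n}"
    using assms by (auto simp: dvd_imp_le le_neq_implies_less)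
  have fin: "finite {d. d dvd n \<and> d < n}" by simp
  have "(\<Sum>d\<in>{d. d dvd n}. gg d) = gg n + (\<Sum>d\<in>{d. d dvd n \<and> d < n}. gg d)"
    unfolding e using fin by (subst sum.insert) auto
  also have "\<dots> = 1 / real n" using assms by (subst gg.simps[of n]) simp
  finally show ?thesis .
qed

lemma FF_g:
  assumes "0 < z" "finite K"
  shows "FF K z = (\<Sum>d\<in>{d. d dvd z}. if (\<forall>c\<in>K. \<not> d dvd c) then gg d else 0)"
proof -
  define D where "D = {d. d dvd z}"
  have finD: "finite D" using assms by (simp add: D_def finite_divisors_nat)
  define h where "h T d = (if T \<subseteq> {c \<in> K. d dvd c} then (-1::real) ^ card T * gg d else 0)" for T d
  have "FF K z = (\<Sum>T\<in>Pow K. \<Sum>d\<in>D. h T d)"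
    unfolding FF_def
  proof (rule sum.cong)
    fix T assume T: "T \<in> Pow K"
    define G where "G = Gcd (insert z T)"
    have Gpos: "0 < G" using assms(1) by (simp add: G_def Gcd_0_iff)
    have eD: "{d. d dvd G} = {d \<in> D. T \<subseteq> {c \<in> K. d dvd c}}"
      using T by (auto simp: G_def D_def dvd_Gcd_iff)
    have "(-1::real) ^ card T / real G = (-1::real) ^ card T * (\<Sum>d\<in>{d. d dvd G}. gg d)"
      using gg_sum[OF Gpos] by simp
    also have "\<dots> = (-1::real) ^ card T * (\<Sum>d\<in>D. if T \<subseteq> {c \<in> K. d dvd c} then gg d else 0)"
      unfolding eD using finD by (simp add: sum.inter_filter)
    also have "\<dots> = (\<Sum>d\<in>D. h T d)"
      unfolding h_def sum_distrib_left by (rule sum.cong) auto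
    finally show "(-1::real) ^ card T / real (Gcd (insert z T)) = (\<Sum>d\<in>D. h T d)"
      by (simp add: G_def)
  qed simp
  also have "\<dots> = (\<Sum>d\<in>D. \<Sum>T\<in>Pow K. h T d)" by (rule sum.swap)
  also have "\<dots> = (\<Sum>d\<in>D. if (\<forall>c\<in>K. \<not> d dvd c) then gg d else 0)"
  proof (rule sum.cong)
    fix d assume d: "d \<in> D"
    define Kd where "Kd = {c \<in> K. d dvd c}"
    have finKd: "finite Kd" using assms(2) by (simp add: Kd_def)
    have eP: "{T \<in> Pow K. T \<subseteq> Kd} = Pow Kd" by (auto simp: Kd_def)
    have "(\<Sum>T\<in>Pow K. h T d) = (\<Sum>T\<in>{T \<in> Pow K. T \<subseteq> Kd}. (-1::real) ^ card T * gg d)"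
      unfolding h_def Kd_def using assms(2) by (intro sum.inter_filter[symmetric]) simp
    also have "\<dots> = (\<Sum>T\<in>Pow Kd. (-1::real) ^ card T) * gg d"
      unfolding eP by (simp add: sum_distrib_right)
    also have "\<dots> = (if (\<forall>c\<in>K. \<not> d dvd c) then gg d else 0)"
      using alt_sum_Pow[OF finKd] by (auto simp: Kd_def)
    finally show "(\<Sum>T\<in>Pow K. h T d) = (if (\<forall>c\<in>K. \<not> d dvd c) then gg d else 0)" .
  qed simp
  finally show ?thesis by (simp add: D_def)
qed

lemma cover_exists:
  assumes "finite S" "0 \<notin> S" "z \<in> S" "u \<in> S" "u dvd z" "u \<noteq> z"
  shows "\<exists>c\<in>covered_by S z. u dvd c"
proof -
  define M where "M = {v \<in> S. u dvd v \<and> v dvd z \<and> v \<noteq> z}"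
  have finM: "finite M" using assms(1) by (simp add: M_def)
  have uM: "u \<in> M" using assms by (simp add: M_def)
  define c where "c = Max M"
  have cM: "c \<in> M" unfolding c_def using finM uM by (intro Max_in) auto
  have cmax: "\<And>v. v \<in> M \<Longrightarrow> v \<le> c" unfolding c_def using finM by simp
  have "c \<in> covered_by S z"
    unfolding covered_by_def
  proof (intro CollectI conjI)
    show "c \<in> S" "c dvd z" "c \<noteq> z" using cM by (auto simp: M_def)
    show "\<not> (\<exists>w\<in>S. c dvd w \<and> w dvd z \<and> w \<noteq> c \<and> w \<noteq> z)"
    proof
      assume "\<exists>w\<in>S. c dvd w \<and> w dvd z \<and> w \<noteq> c \<and> w \<noteq> z"
      then obtain w where w: "w \<in> S" "c dvd w" "w dvd z" "w \<noteq> c" "w \<noteq> z" by blast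
      have "u dvd w" using cM w by (auto simp: M_def intro: dvd_trans)
      then have "w \<in> M" using w by (simp add: M_def)
      then have "w \<le> c" by (rule cmax)
      moreover have "0 < w" using w assms(2) by (cases w) auto
      then have "c \<le> w" using w by (simp add: dvd_imp_le)
      ultimately show False using w by simp
    qed
  qed
  moreover have "u dvd c" using cM by (simp add: M_def)
  ultimately show ?thesis by blast
qed

lemma Gcd_in_closed:
  assumes "gcd_closed S" "finite A" "A \<noteq> {}" "A \<subseteq> S"
  shows "Gcd A \<in> S"
  using assms(2,3,4)
proof (induction A rule: finite_ne_induct)
  case (singleton x) then show ?case by simp
next
  case (insert x F)
  then show ?case using assms(1) by (simp add: gcd_closed_def)
qed

lemma unique_min:
  assumes "finite S" "0 \<notin> S" "gcd_closed S" "y \<in> S" "d dvd y"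
  shows "\<exists>m. {z \<in> {z \<in> S. z dvd y}. d dvd z \<and> (\<forall>c\<in>covered_by S z. \<not> d dvd c)} = {m}"
proof -
  define M where "M = {w \<in> S. d dvd w \<and> w dvd y}"
  have finM: "finite M" using assms(1) by (simp add: M_def)
  have yM: "y \<in> M" using assms by (simp add: M_def)
  define m where "m = Gcd M"
  have "M \<noteq> {}" "M \<subseteq> S" using yM by (auto simp: M_def)
  then have mS: "m \<in> S" unfolding m_def using Gcd_in_closed[OF assms(3) finM] by blast
  have dm: "d dvd m" unfolding m_def by (auto simp: dvd_Gcd_iff M_def)
  have my: "m dvd y" unfolding m_def using yM by (rule Gcd_dvd)
  have mdvd: "\<And>w. w \<in> M \<Longrightarrow> m dvd w" unfolding m_def by (rule Gcd_dvd)
  have mgood: "\<forall>c\<in>covered_by S m. \<not> d dvd c"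
  proof
    fix c assume c: "c \<in> covered_by S m"
    show "\<not> d dvd c"
    proof
      assume dc: "d dvd c"
      have "c \<in> S" "c dvd m" "c \<noteq> m" using c by (auto simp: covered_by_def)
      then have "c \<in> M" using dc my by (auto simp: M_def intro: dvd_trans)
      then have "m dvd c" by (rule mdvd)
      then show False using \<open>c dvd m\<close> \<open>c \<noteq> m\<close> by (simp add: dvd_antisym)
    qed
  qed
  have "{z \<in> {z \<in> S. z dvd y}. d dvd z \<and> (\<forall>c\<in>covered_by S z. \<not> d dvd c)} = {m}"
  proof (rule set_eqI, rule iffI)
    fix z assume "z \<in> {z \<in> {z \<in> S. z dvd y}. d dvd z \<and> (\<forall>c\<in>covered_by S z. \<not> d dvd c)}"
    then have z: "z \<in> S" "z dvd y" "d dvd z" "\<forall>c\<in>covered_by S z. \<not> d dvd c" by auto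
    then have "z \<in> M" by (simp add: M_def)
    then have mz: "m dvd z" by (rule mdvd)
    show "z \<in> {m}"
    proof (rule ccontr)
      assume "z \<notin> {m}"
      then have "m \<noteq> z" by simp
      then obtain c where "c \<in> covered_by S z" "m dvd c"
        using cover_exists[OF assms(1,2) z(1) mS mz] by blast
      then show False using z(4) dm by (meson dvd_trans)
    qed
  next
    fix z assume "z \<in> {m}"
    then show "z \<in> {z \<in> {z \<in> S. z dvd y}. d dvd z \<and> (\<forall>c\<in>covered_by S z. \<not> d dvd c)}"
      using mS my dm mgood by simp
  qed
  then show ?thesis by blast
qed

lemma FF_sum:
  assumes "finite S" "0 \<notin> S" "gcd_closed S" "y \<in> S"
  shows "(\<Sum>z\<in>{z \<in> S. z dvd y}. FF (covered_by S z) z) = 1 / real y"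
proof -
  define Z where "Z = {z \<in> S. z dvd y}"
  define Dy where "Dy = {d. d dvd y}"
  have ypos: "0 < y" using assms by (cases y) auto
  have finZ: "finite Z" using assms(1) by (simp add: Z_def)
  have finDy: "finite Dy" using ypos by (simp add: Dy_def finite_divisors_nat)
  define P where "P z d = (d dvd z \<and> (\<forall>c\<in>covered_by S z. \<not> d dvd c))" for z d
  have "(\<Sum>z\<in>Z. FF (covered_by S z) z) = (\<Sum>z\<in>Z. \<Sum>d\<in>Dy. if P z d then gg d else 0)"
  proof (rule sum.cong)
    fix z assume z: "z \<in> Z"
    have zpos: "0 < z" using z assms(2) by (cases z) (auto simp: Z_def)
    have fin: "finite (covered_by S z)" using assms(1)
      by (rule finite_subset[rotated]) (auto simp: covered_by_def)
    have e: "{d. d dvd z} = {d \<in> Dy. d dvd z}" using z by (auto simp: Dy_def Z_def intro: dvd_trans)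
    have "FF (covered_by S z) z = (\<Sum>d\<in>{d. d dvd z}. if (\<forall>c\<in>covered_by S z. \<not> d dvd c) then gg d else 0)"
      by (rule FF_g[OF zpos fin])
    also have "\<dots> = (\<Sum>d\<in>Dy. if d dvd z then (if (\<forall>c\<in>covered_by S z. \<not> d dvd c) then gg d else 0) else 0)"
      unfolding e using finDy by (rule sum.inter_filter)
    also have "\<dots> = (\<Sum>d\<in>Dy. if P z d then gg d else 0)"
      by (rule sum.cong) (auto simp: P_def)
    finally show "FF (covered_by S z) z = (\<Sum>d\<in>Dy. if P z d then gg d else 0)" .
  qed simp
  also have "\<dots> = (\<Sum>d\<in>Dy. \<Sum>z\<in>Z. if P z d then gg d else 0)" by (rule sum.swap)
  also have "\<dots> = (\<Sum>d\<in>Dy. gg d)"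
  proof (rule sum.cong)
    fix d assume d: "d \<in> Dy"
    obtain m where m: "{z \<in> Z. P z d} = {m}"
      using unique_min[OF assms(1-4), of d] d by (auto simp: Dy_def Z_def P_def)
    have "(\<Sum>z\<in>Z. if P z d then gg d else 0) = (\<Sum>z\<in>{z \<in> Z. P z d}. gg d)"
      using finZ by (rule sum.inter_filter[symmetric])
    also have "\<dots> = gg d" unfolding m by simp
    finally show "(\<Sum>z\<in>Z. if P z d then gg d else 0) = gg d" .
  qed simp
  also have "\<dots> = 1 / real y" unfolding Dy_def by (rule gg_sum[OF ypos])
  finally show ?thesis by (simp add: Z_def)
qed

lemma Psi_FF:
  assumes "finite S" "0 \<notin> S" "gcd_closed S"
  shows "y \<in> S \<Longrightarrow> Psi_inv S y = FF (covered_by S y) y"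
proof (induction y rule: less_induct)
  case (less y)
  define Z where "Z = {z \<in> S. z dvd y}"
  have ypos: "0 < y" using less.prems assms by (cases y) auto
  have finZ: "finite Z" using assms(1) by (simp add: Z_def)
  have yZ: "y \<in> Z" using less.prems by (simp add: Z_def)
  have IH: "(\<Sum>z\<in>Z - {y}. Psi_inv S z) = (\<Sum>z\<in>Z - {y}. FF (covered_by S z) z)"
  proof (rule sum.cong)
    fix z assume z: "z \<in> Z - {y}"
    then have "z < y" using ypos by (auto simp: Z_def dvd_imp_le le_neq_implies_less)
    then show "Psi_inv S z = FF (covered_by S z) z" using less.IH z by (auto simp: Z_def)
  qed simp
  have a: "Psi_inv S y + (\<Sum>z\<in>Z - {y}. Psi_inv S z) = 1 / real y"
    using psi_sum[OF assms(1,2) less.prems] sum.remove[OF finZ yZ, of "Psi_inv S"] by (simp add: Z_def)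
  have b: "FF (covered_by S y) y + (\<Sum>z\<in>Z - {y}. FF (covered_by S z) z) = 1 / real y"
    using FF_sum[OF assms less.prems] sum.remove[OF finZ yZ, of "\<lambda>z. FF (covered_by S z) z"]
    by (simp add: Z_def)
  show ?case using a b IH by simp
qed

theorem theorem4p2:
  fixes S :: "nat set" and xi :: nat
  assumes "finite S" and "0 \<notin> S" and "gcd_closed S"
    and "xi \<in> S" and "generates_double_chain S xi"
  shows "Psi_inv S xi \<noteq> 0"
proof -
  define C where "C = covered_by S xi"
  have PF: "Psi_inv S xi = FF C xi" unfolding C_def using Psi_FF[OF assms(1-3) assms(4)] .
  have xpos: "0 < xi" using assms(2,4) by (cases xi) auto
  have CS: "C \<subseteq> S" by (auto simp: C_def covered_by_def)
  have finC: "finite C" using CS assms(1) finite_subset by blast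
  have Cprop: "\<forall>c\<in>C. c dvd xi \<and> 0 < c \<and> c \<noteq> xi"
  proof
    fix c assume c: "c \<in> C"
    then have "c \<in> S" using CS by blast
    then have "0 < c" using assms(2) by (cases c) auto
    then show "c dvd xi \<and> 0 < c \<and> c \<noteq> xi" using c by (auto simp: C_def covered_by_def)
  qed
  have anti: "\<forall>a\<in>C. \<forall>b\<in>C. a dvd b \<longrightarrow> a = b"
  proof (intro ballI impI)
    fix a b assume ab: "a \<in> C" "b \<in> C" "a dvd b"
    show "a = b"
    proof (rule ccontr)
      assume "a \<noteq> b"
      then show False using ab Cprop CS unfolding C_def covered_by_def by blast
    qed
  qed
  obtain A B where AB: "A \<inter> B = {}" "dvd_chain A" "dvd_chain B"
      "meetcl C - C = A \<union> B"
    using assms(5) unfolding generates_double_chain_def C_def by blast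
  have pg: "\<forall>a\<in>C. \<forall>b\<in>C. a \<noteq> b \<longrightarrow> gcd a b \<in> A \<union> B"
  proof (intro ballI impI)
    fix a b assume ab: "a \<in> C" "b \<in> C" "a \<noteq> b"
    have "gcd a b \<in> meetcl C"
      unfolding meetcl_def using ab by (intro CollectI exI[of _ "{a, b}"]) auto
    moreover have "gcd a b \<notin> C"
    proof
      assume g: "gcd a b \<in> C"
      have "gcd a b = a" using anti g ab by simp
      moreover have "gcd a b = b" using anti g ab by simp
      ultimately show False using ab by simp
    qed
    ultimately show "gcd a b \<in> A \<union> B" using AB(4) by blast
  qed
  show ?thesis
  proof (cases "card C")
    case 0
    then have "C = {}" using finC by simp
    then show ?thesis using PF FF_empty xpos by simp
  next
    case (Suc n)
    show ?thesis
    proof (cases n)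
      case 0
      then obtain c where c: "C = {c}" using Suc card_1_singletonE by auto
      then have "c dvd xi" "c \<noteq> xi" using Cprop by auto
      then have "FF C xi = 1 / real xi - 1 / real c"
        using c FF_single by (simp add: gcd_nat.absorb2)
      moreover have "real xi \<noteq> real c" using \<open>c \<noteq> xi\<close> by simp
      ultimately show ?thesis using PF by simp
    next
      case (Suc m)
      then have "2 \<le> card C" using \<open>card C = Suc n\<close> by simp
      then have "FF C xi > 0"
        using FF_pos[OF finC _ xpos _ anti pg AB(2) AB(3)] Cprop by auto
      then show ?thesis using PF by simp
    qed
  qed
qed

end
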